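(* Let $s\in(0,1)$, let $\Sigma\subset\mathbb{S}^{n-1}$ be measurable with $|\Sigma|>0$, and let $K:\mathbb{S}^{n-1}\to[0,1]$ be measurable with $\eta:=\inf_\Sigma K>0$. Let $\overline r>0$. Then there exists $c=c(n,s,\Sigma,\overline r)>0$ such that for all $R,R'>0$ with $RR'\ge\overline r$ and all $\xi\in\mathbb{R}^n\setminus B(0,R')$, \[ \int_{B(0,R)}\frac{1-\cos(2\xi\cdot h)}{|h|^{n+2s}}K(h/|h|)\,dh\ge c\,\eta\,|\xi|^{2s}. \] If $R=+\infty$ and $R'=0$, this holds with $\overline r=1$. In particular, there is $c=c(n,s,\Sigma)>0$ such that for every $k\in\mathbb{Z}^n$, \[ \int_{\mathbb{T}^n}\big(1-\cos(2\pi\langle k,h\rangle)\big)\sum_{m\in\mathbb{Z}^n}\frac{K\big(\frac{h+m}{|h+m|}\big)}{|h+m|^{n+2s}}\,dh\ge c\,\eta\,|k|^{2s}. \]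
   Context: $\mathbb{T}^n$ denotes the cube $[-\frac12,\frac12]^n$ (with opposite faces identified); $|\Sigma|$ is surface measure on $\mathbb{S}^{n-1}$. *)

theory Defs
  imports "HOL-Analysis.Analysis"
begin

definition sphere_cone :: "'a::real_normed_vector set \<Rightarrow> 'a set" where
  "sphere_cone S = {t *\<^sub>R x | t x. 0 < t \<and> t \<le> 1 \<and> x \<in> S}"

text \<open>Measurability on the sphere (w.r.t. surface measure) and surface measure
  itself, via the standard cone construction: |S| = n * Leb(cone S).\<close>
definition sphere_measurable :: "(real ^ 'n) set \<Rightarrow> bool" where
  "sphere_measurable S \<longleftrightarrow> S \<subseteq> sphere 0 1 \<and> sphere_cone S \<in> sets lebesgue"

definition surface_measure :: "(real ^ 'n) set \<Rightarrow> real" where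
  "surface_measure S = real CARD('n) * measure lebesgue (sphere_cone S)"

definition int_lattice :: "(real ^ 'n) set" where
  "int_lattice = {m. \<forall>i. m $ i \<in> \<int>}"

definition unit_cube :: "(real ^ 'n) set" where
  "unit_cube = {h. \<forall>i. - (1/2) \<le> h $ i \<and> h $ i \<le> 1/2}"

end

theory Submission
  imports Defs
begin
lemma cos_lb1: fixes x :: real assumes "x \<ge> 0" shows "1 - x\<^sup>2 / 2 \<le> cos x"
proof -
  let ?f = "\<lambda>x::real. cos x - 1 + x\<^sup>2 / 2"
  have "\<And>u. \<lbrakk>0 \<le> u; u \<le> x\<rbrakk> \<Longrightarrow> (?f has_real_derivative (- sin u + u)) (at u)"
    by (auto intro!: derivative_eq_intros simp: field_simps power2_eq_square)
  moreover have "\<And>u. \<lbrakk>0 \<le> u; u \<le> x\<rbrakk> \<Longrightarrow> 0 \<le> - sin u + u" using sin_x_le_x by force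
  ultimately have "?f x \<ge> ?f 0"
    by (intro DERIV_nonneg_imp_nondecreasing[OF assms]) blast
  then show ?thesis by simp
qed

lemma sin_lb1: fixes x :: real assumes "x \<ge> 0" shows "x - x^3 / 6 \<le> sin x"
proof -
  let ?f = "\<lambda>x::real. sin x - x + x^3 / 6"
  have "\<And>u. \<lbrakk>0 \<le> u; u \<le> x\<rbrakk> \<Longrightarrow> (?f has_real_derivative (cos u - 1 + u\<^sup>2 / 2)) (at u)"
    by (auto intro!: derivative_eq_intros simp: field_simps power2_eq_square)
  moreover have "\<And>u. \<lbrakk>0 \<le> u; u \<le> x\<rbrakk> \<Longrightarrow> 0 \<le> cos u - 1 + u\<^sup>2 / 2" using cos_lb1 by force
  ultimately have "?f x \<ge> ?f 0"
    by (intro DERIV_nonneg_imp_nondecreasing[OF assms]) blast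
  then show ?thesis by simp
qed

lemma cos_ub1: fixes x :: real assumes "x \<ge> 0" shows "x\<^sup>2 / 2 - x^4 / 24 \<le> 1 - cos x"
proof -
  let ?f = "\<lambda>x::real. 1 - cos x - x\<^sup>2 / 2 + x^4 / 24"
  have "\<And>u. \<lbrakk>0 \<le> u; u \<le> x\<rbrakk> \<Longrightarrow> (?f has_real_derivative (sin u - u + u^3 / 6)) (at u)"
    by (auto intro!: derivative_eq_intros simp: field_simps power2_eq_square)
  moreover have "\<And>u. \<lbrakk>0 \<le> u; u \<le> x\<rbrakk> \<Longrightarrow> 0 \<le> sin u - u + u^3/6" using sin_lb1 by force
  ultimately have "?f x \<ge> ?f 0"
    by (intro DERIV_nonneg_imp_nondecreasing[OF assms]) blast
  then show ?thesis by simp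
qed

lemma one_minus_cos_lb: fixes y :: real assumes "\<bar>y\<bar> \<le> 1" shows "y\<^sup>2 / 4 \<le> 1 - cos y"
proof -
  have "\<bar>y\<bar>\<^sup>2 / 2 - \<bar>y\<bar>^4 / 24 \<le> 1 - cos \<bar>y\<bar>" by (rule cos_ub1) simp
  moreover have "cos \<bar>y\<bar> = cos y" by (cases "y \<ge> 0") auto
  moreover have "\<bar>y\<bar>^4 \<le> \<bar>y\<bar>^2"
    using assms by (intro power_decreasing) auto
  ultimately have "y^2 / 2 - y^4 / 24 \<le> 1 - cos y" "y^4 \<le> y^2"
    by (simp_all add: power2_abs power_abs[symmetric])
  moreover have "0 \<le> y^2" by simp
  ultimately show ?thesis by linarith
qed

lemma nn_integral_scale:
  fixes f :: "'a::euclidean_space \<Rightarrow> ennreal"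
  assumes f[measurable]: "f \<in> borel_measurable lebesgue" and c: "c \<noteq> 0"
  shows "(\<integral>\<^sup>+x. f x \<partial>lebesgue) = ennreal (\<bar>c\<bar> ^ DIM('a)) * (\<integral>\<^sup>+x. f (c *\<^sub>R x) \<partial>lebesgue)"
proof -
  have L: "lebesgue = density (distr lebesgue lebesgue (\<lambda>x::'a. c *\<^sub>R x)) (\<lambda>_. ennreal (\<bar>c\<bar> ^ DIM('a)))"
    using lebesgue_affine_euclidean[of "\<lambda>_::'a. c" 0] c
    unfolding scaleR_scaleR[symmetric] scaleR_sum_right[symmetric] euclidean_representation
    by (simp add: prod_constant)
  have "(\<integral>\<^sup>+x. f x \<partial>lebesgue) = (\<integral>\<^sup>+x. f x \<partial>density (distr lebesgue lebesgue (\<lambda>x::'a. c *\<^sub>R x)) (\<lambda>_. ennreal (\<bar>c\<bar> ^ DIM('a))))"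
    using L by simp
  also have "\<dots> = \<integral>\<^sup>+ x. ennreal (\<bar>c\<bar> ^ DIM('a)) * f x \<partial>distr lebesgue lebesgue (\<lambda>x. c *\<^sub>R x)"
    by (subst nn_integral_density) auto
  also have "\<dots> = ennreal (\<bar>c\<bar> ^ DIM('a)) * integral\<^sup>N (distr lebesgue lebesgue (\<lambda>x. c *\<^sub>R x)) f"
    using f measurable_distr_eq1 nn_integral_cmult by blast
  also have "\<dots> = ennreal (\<bar>c\<bar> ^ DIM('a)) * (\<integral>\<^sup>+x. f (c *\<^sub>R x) \<partial>lebesgue)"
    by (subst nn_integral_distr) auto
  finally show ?thesis .
qed

lemma cone_norm:
  assumes "S \<subseteq> sphere 0 1" "y \<in> sphere_cone S" shows "norm y \<le> 1"
  using assms unfolding sphere_cone_def by auto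

lemma cone_finite:
  fixes S :: "(real^'n) set"
  assumes "sphere_measurable S" shows "emeasure lebesgue (sphere_cone S) < \<infinity>"
proof -
  have "bounded (sphere_cone S)"
    using cone_norm assms unfolding sphere_measurable_def bounded_iff by blast
  then have "sphere_cone S \<in> lmeasurable"
    using bounded_set_imp_lmeasurable assms unfolding sphere_measurable_def by blast
  then show ?thesis using fmeasurableD2[of "sphere_cone S" lebesgue] by (simp add: less_top)
qed

definition Qf :: "(real^'n) set \<Rightarrow> real^'n \<Rightarrow> real" where
  "Qf C \<xi> = (\<integral>u. (\<xi> \<bullet> u)^2 * indicator C u \<partial>lebesgue)"

lemma inner_meas: "(\<lambda>u::real^'n. (\<xi> \<bullet> u)^2) \<in> borel_measurable lebesgue"
  by (rule measurable_completion) simp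

lemma comp_meas: "(\<lambda>u::real^'n. u$i * u$j) \<in> borel_measurable lebesgue"
  by (rule measurable_completion) simp

lemma Q_integrable:
  fixes S :: "(real^'n) set"
  assumes "sphere_measurable S"
  shows "integrable lebesgue (\<lambda>u. (\<xi> \<bullet> u)^2 * indicator (sphere_cone S) u)"
proof -
  have "integrable lebesgue (\<lambda>u. indicator (sphere_cone S) u *\<^sub>R (\<xi> \<bullet> u)^2)"
  proof (rule integrableI_bounded_set_indicator[where B="norm \<xi> ^ 2"])
    show "sphere_cone S \<in> sets lebesgue" using assms unfolding sphere_measurable_def by blast
    show "(\<lambda>u::real^'n. (\<xi> \<bullet> u)^2) \<in> borel_measurable lebesgue" by (rule inner_meas)
    show "emeasure lebesgue (sphere_cone S) < \<infinity>" using cone_finite assms by blast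
    show "AE x in lebesgue. x \<in> sphere_cone S \<longrightarrow> norm ((\<xi> \<bullet> x)\<^sup>2) \<le> (norm \<xi>)\<^sup>2"
    proof (intro AE_I2 impI)
      fix x assume "x \<in> sphere_cone S"
      then have "norm x \<le> 1" using cone_norm assms unfolding sphere_measurable_def by blast
      have "\<bar>\<xi> \<bullet> x\<bar> \<le> norm \<xi> * norm x" by (rule Cauchy_Schwarz_ineq2)
      also have "\<dots> \<le> norm \<xi>" using \<open>norm x \<le> 1\<close> by (simp add: mult_left_le)
      finally have "\<bar>\<xi> \<bullet> x\<bar>^2 \<le> norm \<xi> ^ 2" by (intro power_mono) auto
      then show "norm ((\<xi> \<bullet> x)\<^sup>2) \<le> (norm \<xi>)\<^sup>2" by (simp add: power2_abs)
    qed
  qed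
  then show ?thesis by (simp add: mult.commute)
qed

lemma comp_integrable:
  fixes S :: "(real^'n) set"
  assumes "sphere_measurable S"
  shows "integrable lebesgue (\<lambda>u. u$i * u$j * indicator (sphere_cone S) u)"
proof -
  have "integrable lebesgue (\<lambda>u. indicator (sphere_cone S) u *\<^sub>R (u$i * u$j))"
  proof (rule integrableI_bounded_set_indicator[where B="1"])
    show "sphere_cone S \<in> sets lebesgue" using assms unfolding sphere_measurable_def by blast
    show "(\<lambda>u::real^'n. u$i * u$j) \<in> borel_measurable lebesgue" by (rule comp_meas)
    show "emeasure lebesgue (sphere_cone S) < \<infinity>" using cone_finite assms by blast
    show "AE x in lebesgue. x \<in> sphere_cone S \<longrightarrow> norm (x$i * x$j) \<le> 1"
    proof (intro AE_I2 impI)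
      fix x assume "x \<in> sphere_cone S"
      then have "norm x \<le> 1" using cone_norm assms unfolding sphere_measurable_def by blast
      have "\<bar>x$i\<bar> \<le> 1" "\<bar>x$j\<bar> \<le> 1"
        using component_le_norm_cart[of x i] component_le_norm_cart[of x j] \<open>norm x \<le> 1\<close> by auto
      then show "norm (x$i * x$j) \<le> 1" by (simp add: abs_mult mult_le_one)
    qed
  qed
  then show ?thesis by (simp add: mult.commute)
qed

lemma Q_sum:
  fixes S :: "(real^'n) set"
  assumes sm: "sphere_measurable S"
  shows "Qf (sphere_cone S) \<xi> = (\<Sum>i\<in>UNIV. \<Sum>j\<in>UNIV. \<xi>$i * \<xi>$j * (\<integral>u. u$i * u$j * indicator (sphere_cone S) u \<partial>lebesgue))"
proof -
  let ?C = "sphere_cone S"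
  have I: "integrable lebesgue (\<lambda>u. u$i * u$j * indicator ?C u)" for i j
    using comp_integrable[OF sm] .
  have eq: "(\<xi> \<bullet> u)^2 * indicator ?C u = (\<Sum>i\<in>UNIV. \<Sum>j\<in>UNIV. \<xi>$i * \<xi>$j * (u$i * u$j * indicator ?C u))" for u
  proof -
    have "(\<xi> \<bullet> u)^2 = (\<Sum>i\<in>UNIV. \<xi>$i * u$i) * (\<Sum>j\<in>UNIV. \<xi>$j * u$j)"
      by (simp add: inner_vec_def power2_eq_square)
    also have "\<dots> = (\<Sum>i\<in>UNIV. \<Sum>j\<in>UNIV. \<xi>$i * u$i * (\<xi>$j * u$j))"
      by (rule sum_product)
    finally show ?thesis
      by (simp add: sum_distrib_right sum_distrib_left mult_ac)
  qed
  have "Qf ?C \<xi> = (\<integral>u. (\<Sum>i\<in>UNIV. \<Sum>j\<in>UNIV. \<xi>$i * \<xi>$j * (u$i * u$j * indicator ?C u)) \<partial>lebesgue)"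
    unfolding Qf_def by (rule Bochner_Integration.integral_cong[OF refl]) (rule eq)
  also have "\<dots> = (\<Sum>i\<in>UNIV. \<integral>u. (\<Sum>j\<in>UNIV. \<xi>$i * \<xi>$j * (u$i * u$j * indicator ?C u)) \<partial>lebesgue)"
    by (subst Bochner_Integration.integral_sum) (auto intro!: integrable_sum integrable_mult_right I)
  also have "\<dots> = (\<Sum>i\<in>UNIV. \<Sum>j\<in>UNIV. \<integral>u. \<xi>$i * \<xi>$j * (u$i * u$j * indicator ?C u) \<partial>lebesgue)"
  proof (rule sum.cong[OF refl])
    fix i show "(\<integral>u. (\<Sum>j\<in>UNIV. \<xi>$i * \<xi>$j * (u$i * u$j * indicator ?C u)) \<partial>lebesgue) = (\<Sum>j\<in>UNIV. \<integral>u. \<xi>$i * \<xi>$j * (u$i * u$j * indicator ?C u) \<partial>lebesgue)"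
      by (subst Bochner_Integration.integral_sum) (auto intro!: integrable_mult_right I)
  qed
  also have "\<dots> = (\<Sum>i\<in>UNIV. \<Sum>j\<in>UNIV. \<xi>$i * \<xi>$j * (\<integral>u. u$i * u$j * indicator ?C u \<partial>lebesgue))"
    by (simp add: integral_mult_right_zero)
  finally show ?thesis .
qed

lemma Q_homog: "Qf C (a *\<^sub>R e) = a^2 * Qf C e"
  unfolding Qf_def by (simp add: power_mult_distrib mult.assoc)

lemma Q_pos:
  fixes S :: "(real^'n) set"
  assumes sm: "sphere_measurable S" and pos: "surface_measure S > 0" and nz: "\<xi> \<noteq> 0"
  shows "Qf (sphere_cone S) \<xi> > 0"
proof (rule ccontr)
  let ?C = "sphere_cone S"
  have Cm: "?C \<in> sets lebesgue" using sm unfolding sphere_measurable_def by blast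
  assume "\<not> Qf ?C \<xi> > 0"
  moreover have "Qf ?C \<xi> \<ge> 0" unfolding Qf_def by (intro integral_nonneg_AE AE_I2) auto
  ultimately have "Qf ?C \<xi> = 0" by simp
  then have "AE u in lebesgue. (\<xi> \<bullet> u)^2 * indicator ?C u = 0"
    unfolding Qf_def using integral_nonneg_eq_0_iff_AE[OF Q_integrable[OF sm]] by simp
  moreover have "{u. \<xi> \<bullet> u = 0} \<in> null_sets lebesgue"
    using negligible_hyperplane[of \<xi> 0] nz negligible_iff_null_sets by blast
  then have "AE u in lebesgue. u \<notin> {u. \<xi> \<bullet> u = 0}" by (rule AE_not_in)
  ultimately have "AE u in lebesgue. u \<notin> ?C"
    by eventually_elim (auto simp: indicator_def split: if_splits)
  then have "emeasure lebesgue ?C = 0"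
    using AE_iff_measurable[OF Cm, of "\<lambda>u. u \<notin> ?C"] by simp
  then have "measure lebesgue ?C = 0" by (simp add: measure_def)
  then show False using pos unfolding surface_measure_def by simp
qed

lemma Q_min:
  fixes S :: "(real^'n) set"
  assumes sm: "sphere_measurable S" and pos: "surface_measure S > 0"
  shows "\<exists>m>0. \<forall>\<xi>. m * norm \<xi> ^ 2 \<le> Qf (sphere_cone S) \<xi>"
proof -
  let ?C = "sphere_cone S"
  have "Qf ?C = (\<lambda>\<xi>. \<Sum>i\<in>UNIV. \<Sum>j\<in>UNIV. \<xi>$i * \<xi>$j * (\<integral>u. u$i * u$j * indicator ?C u \<partial>lebesgue))"
    using Q_sum[OF sm] by (intro ext) blast
  then have cont: "continuous_on (sphere 0 1) (Qf ?C)"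
    by (simp add: continuous_intros)
  obtain e0 where e0: "e0 \<in> sphere (0::real^'n) 1" "\<forall>y\<in>sphere 0 1. Qf ?C e0 \<le> Qf ?C y"
    using continuous_attains_inf[OF compact_sphere _ cont] by auto
  have e0nz: "e0 \<noteq> 0" using e0 by auto
  have mpos: "Qf ?C e0 > 0" using Q_pos[OF sm pos e0nz] .
  have "Qf ?C e0 * norm \<xi> ^ 2 \<le> Qf ?C \<xi>" for \<xi>
  proof (cases "\<xi> = 0")
    case True then show ?thesis using Q_homog[of ?C 0 \<xi>] by simp
  next
    case False
    let ?e = "(1 / norm \<xi>) *\<^sub>R \<xi>"
    have "?e \<in> sphere 0 1" using False by (simp add: norm_scaleR)
    then have "Qf ?C e0 \<le> Qf ?C ?e" using e0 by blast
    moreover have "\<xi> = norm \<xi> *\<^sub>R ?e" using False by simp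
    then have "Qf ?C \<xi> = norm \<xi> ^ 2 * Qf ?C ?e" using Q_homog by metis
    ultimately show ?thesis by (metis mult.commute mult_left_mono zero_le_power2)
  qed
  then show ?thesis using mpos by blast
qed

lemma core_int:
  fixes S :: "(real^'n) set"
  assumes sm: "sphere_measurable S" and rho: "\<rho> > 0" and nz: "\<xi> \<noteq> 0"
  shows "(\<integral>\<^sup>+h. ennreal ((\<xi> \<bullet> h)^2 * indicator (sphere_cone S) ((norm \<xi> / \<rho>) *\<^sub>R h)) \<partial>lebesgue)
     = ennreal ((\<rho> / norm \<xi>)^(CARD('n)+2) * Qf (sphere_cone S) \<xi>)"
proof -
  let ?C = "sphere_cone S" and ?c = "\<rho> / norm \<xi>"
  have Cm[measurable]: "?C \<in> sets lebesgue" using sm unfolding sphere_measurable_def by blast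
  have cpos: "?c > 0" using rho nz by simp
  have ind: "(\<lambda>h. indicator ?C ((norm \<xi> / \<rho>) *\<^sub>R h) :: real) \<in> borel_measurable lebesgue"
    by (rule measurable_compose[OF lebesgue_measurable_scaling]) simp
  have meas: "(\<lambda>h. ennreal ((\<xi> \<bullet> h)^2 * indicator ?C ((norm \<xi> / \<rho>) *\<^sub>R h))) \<in> borel_measurable lebesgue"
    using inner_meas ind by measurable
  have meas2: "(\<lambda>h. ennreal ((\<xi> \<bullet> h)^2 * indicator ?C h)) \<in> borel_measurable lebesgue"
    using inner_meas by measurable
  have "(\<integral>\<^sup>+h. ennreal ((\<xi> \<bullet> h)^2 * indicator ?C ((norm \<xi> / \<rho>) *\<^sub>R h)) \<partial>lebesgue)
      = ennreal (\<bar>?c\<bar> ^ DIM(real^'n)) * (\<integral>\<^sup>+x. ennreal ((\<xi> \<bullet> (?c *\<^sub>R x))^2 * indicator ?C ((norm \<xi> / \<rho>) *\<^sub>R (?c *\<^sub>R x))) \<partial>lebesgue)"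
    by (rule nn_integral_scale[OF meas]) (use rho nz in simp)
  also have "(\<lambda>x. ennreal ((\<xi> \<bullet> (?c *\<^sub>R x))^2 * indicator ?C ((norm \<xi> / \<rho>) *\<^sub>R (?c *\<^sub>R x))))
      = (\<lambda>x. ennreal (?c^2) * ennreal ((\<xi> \<bullet> x)^2 * indicator ?C x))"
  proof (intro ext)
    fix x :: "real^'n"
    have one: "(norm \<xi> / \<rho>) * ?c = 1" using rho nz by simp
    have "(norm \<xi> / \<rho>) *\<^sub>R (?c *\<^sub>R x) = x" by (metis one scaleR_scaleR scaleR_one)
    note eqx = this
    have "(\<xi> \<bullet> (?c *\<^sub>R x))^2 * indicator ?C ((norm \<xi> / \<rho>) *\<^sub>R (?c *\<^sub>R x)) = ?c^2 * ((\<xi> \<bullet> x)^2 * indicator ?C x)"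
      unfolding eqx inner_scaleR_right power_mult_distrib by simp
    then show "ennreal ((\<xi> \<bullet> (?c *\<^sub>R x))^2 * indicator ?C ((norm \<xi> / \<rho>) *\<^sub>R (?c *\<^sub>R x))) = ennreal (?c^2) * ennreal ((\<xi> \<bullet> x)^2 * indicator ?C x)"
      by (simp add: ennreal_mult')
  qed
  also have "(\<integral>\<^sup>+x. ennreal (?c^2) * ennreal ((\<xi> \<bullet> x)^2 * indicator ?C x) \<partial>lebesgue)
      = ennreal (?c^2) * (\<integral>\<^sup>+x. ennreal ((\<xi> \<bullet> x)^2 * indicator ?C x) \<partial>lebesgue)"
    by (rule nn_integral_cmult[OF meas2])
  also have "(\<integral>\<^sup>+x. ennreal ((\<xi> \<bullet> x)^2 * indicator ?C x) \<partial>lebesgue) = ennreal (Qf ?C \<xi>)"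
    unfolding Qf_def by (rule nn_integral_eq_integral[OF Q_integrable[OF sm]]) auto
  finally have X: "(\<integral>\<^sup>+h. ennreal ((\<xi> \<bullet> h)^2 * indicator ?C ((norm \<xi> / \<rho>) *\<^sub>R h)) \<partial>lebesgue)
     = ennreal (\<bar>?c\<bar> ^ DIM(real^'n)) * (ennreal (?c^2) * ennreal (Qf ?C \<xi>))" .
  have A: "\<bar>?c\<bar> ^ DIM(real^'n) * (?c^2 * Qf ?C \<xi>) = ?c^(CARD('n)+2) * Qf ?C \<xi>"
  proof -
    have ab: "\<bar>?c\<bar> = ?c" by (rule abs_of_pos[OF cpos])
    have dm: "DIM(real^'n) = CARD('n)" by simp
    show ?thesis unfolding ab dm power_add by (simp only: mult_ac)
  qed
  have "ennreal (\<bar>?c\<bar> ^ DIM(real^'n)) * (ennreal (?c^2) * ennreal (Qf ?C \<xi>))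
     = ennreal (\<bar>?c\<bar> ^ DIM(real^'n) * (?c^2 * Qf ?C \<xi>))"
    by (simp add: ennreal_mult')
  then show ?thesis unfolding X A .
qed

lemma pointwise:
  fixes \<xi> h :: "real^'n" and K :: "real^'n \<Rightarrow> real"
  assumes Ssub: "S \<subseteq> sphere 0 1" and Kpos: "\<forall>x\<in>S. \<eta> \<le> K x" and eta: "0 \<le> \<eta>"
    and rho: "0 < \<rho>" "\<rho> \<le> 1/2" and nz: "\<xi> \<noteq> 0" and p: "0 \<le> p"
    and mem: "(norm \<xi> / \<rho>) *\<^sub>R h \<in> sphere_cone S"
  shows "h \<noteq> 0 \<and> norm h \<le> \<rho> / norm \<xi> \<and> h /\<^sub>R norm h \<in> S \<and>
     (norm \<xi> / \<rho>) powr p * \<eta> * (\<xi> \<bullet> h)^2 \<le> (1 - cos (2 * (\<xi> \<bullet> h))) / norm h powr p * K (h /\<^sub>R norm h)"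
proof -
  define a where "a = norm \<xi>"
  have apos: "a > 0" using nz a_def by simp
  obtain t x where tx: "(a / \<rho>) *\<^sub>R h = t *\<^sub>R x" "0 < t" "t \<le> 1" "x \<in> S"
    using mem unfolding sphere_cone_def a_def by blast
  have nx: "norm x = 1" using tx(4) Ssub by auto
  have hx: "h = (\<rho> * t / a) *\<^sub>R x"
  proof -
    have "h = (\<rho> / a) *\<^sub>R ((a / \<rho>) *\<^sub>R h)" using apos rho by simp
    also have "\<dots> = (\<rho> * t / a) *\<^sub>R x" using tx(1) by simp
    finally show ?thesis .
  qed
  have nh: "norm h = \<rho> * t / a" using hx nx apos rho tx by simp
  have hpos: "norm h > 0" using nh apos rho tx by simp
  then have hnz: "h \<noteq> 0" by auto
  have nhle: "norm h \<le> \<rho> / a" using nh apos rho tx by (simp add: divide_right_mono mult_left_le)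
  have dir: "h /\<^sub>R norm h = x" using hx nh apos rho tx by simp
  have "\<bar>\<xi> \<bullet> h\<bar> \<le> a * norm h" unfolding a_def by (rule Cauchy_Schwarz_ineq2)
  also have "\<dots> \<le> a * (\<rho> / a)" using nhle apos by (intro mult_left_mono) auto
  also have "\<dots> = \<rho>" using apos by simp
  finally have ih: "\<bar>\<xi> \<bullet> h\<bar> \<le> \<rho>" .
  have y1: "\<bar>2 * (\<xi> \<bullet> h)\<bar> \<le> 1" using ih rho by simp
  have cosb: "(\<xi> \<bullet> h)^2 \<le> 1 - cos (2 * (\<xi> \<bullet> h))"
    using one_minus_cos_lb[OF y1] by (simp add: power_mult_distrib)
  have pw: "norm h powr p \<le> (\<rho> / a) powr p" using nhle hpos p by (intro powr_mono2) auto
  have pwpos: "norm h powr p > 0" using hpos by simp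
  have inv: "(a / \<rho>) powr p \<le> 1 / norm h powr p"
  proof -
    have rp: "(\<rho> / a) powr p > 0" using apos rho by simp
    have "(a / \<rho>) powr p = 1 / (\<rho> / a) powr p" using apos rho by (simp add: powr_divide)
    also have "\<dots> \<le> 1 / norm h powr p" using pw pwpos \<open>(\<rho> / a) powr p > 0\<close> by (intro divide_left_mono) auto
    finally show ?thesis .
  qed
  have Kx: "\<eta> \<le> K x" using Kpos tx by blast
  have "(a / \<rho>) powr p * \<eta> * (\<xi> \<bullet> h)^2 \<le> (1 / norm h powr p) * K x * (1 - cos (2 * (\<xi> \<bullet> h)))"
    using inv Kx cosb eta by (intro mult_mono) auto
  then have "(a / \<rho>) powr p * \<eta> * (\<xi> \<bullet> h)^2 \<le> (1 - cos (2 * (\<xi> \<bullet> h))) / norm h powr p * K x"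
    by (simp add: mult_ac)
  then show ?thesis using hnz nhle dir tx(4) unfolding a_def by simp
qed

lemma powr_arith:
  fixes a r s :: real and n :: nat
  assumes apos: "a > 0" and rpos: "r > 0"
  shows "(a / r) powr (real n + 2 * s) * e * ((r / a)^(n+2) * (m * a^2)) = m * r powr (2 - 2 * s) * e * a powr (2 * s)"
proof -
  define b where "b = a / r"
  have bpos: "b > 0" using apos rpos b_def by simp
  have 1: "(a / r) powr (real n + 2 * s) = b^n * b powr (2 * s)"
    unfolding b_def[symmetric] using bpos by (simp add: powr_add powr_realpow)
  have 2: "b powr (2 * s) = a powr (2 * s) / r powr (2 * s)"
    unfolding b_def using apos rpos by (simp add: powr_divide)
  have 3: "r powr (2 - 2 * s) = r^2 / r powr (2 * s)"
    using rpos by (simp add: powr_diff powr_realpow)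
  have 4: "b^n * (r / a)^n = 1"
    unfolding b_def using apos rpos by (simp add: power_mult_distrib[symmetric])
  have 5: "(r / a)^2 * a^2 = r^2" using apos by (simp add: power_divide)
  have "(a / r) powr (real n + 2 * s) * e * ((r / a)^(n+2) * (m * a^2))
      = (b^n * (r / a)^n) * b powr (2 * s) * e * m * ((r / a)^2 * a^2)"
    unfolding 1 by (simp only: power_add mult_ac)
  also have "\<dots> = b powr (2 * s) * e * m * r^2" unfolding 4 5 by simp
  also have "\<dots> = m * r powr (2 - 2 * s) * e * a powr (2 * s)"
    unfolding 2 3 by (simp add: field_simps)
  finally show ?thesis .
qed

lemma phi_meas:
  fixes S :: "(real^'n) set"
  assumes sm: "sphere_measurable S"
  shows "(\<lambda>h. ennreal ((\<xi> \<bullet> h)^2 * indicator (sphere_cone S) (b *\<^sub>R h))) \<in> borel_measurable lebesgue"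
proof -
  have Cm[measurable]: "sphere_cone S \<in> sets lebesgue" using sm unfolding sphere_measurable_def by blast
  have ind: "(\<lambda>h. indicator (sphere_cone S) (b *\<^sub>R h) :: real) \<in> borel_measurable lebesgue"
    by (rule measurable_compose[OF lebesgue_measurable_scaling]) simp
  show ?thesis using inner_meas ind by measurable
qed

lemma main_lb:
  fixes S :: "(real^'n) set" and K :: "real^'n \<Rightarrow> real" and F :: "real^'n \<Rightarrow> ennreal"
  assumes sm: "sphere_measurable S"
    and m: "\<forall>\<xi>. m * norm \<xi> ^ 2 \<le> Qf (sphere_cone S) \<xi>" and mpos: "m > 0"
    and Kpos: "\<forall>x\<in>S. \<eta> \<le> K x" and eta: "0 \<le> \<eta>"
    and rho: "0 < \<rho>" "\<rho> \<le> 1/2" and nz: "\<xi> \<noteq> 0" and s: "0 < s"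
    and F: "\<And>h. h \<noteq> 0 \<Longrightarrow> norm h \<le> \<rho> / norm \<xi> \<Longrightarrow>
         ennreal ((1 - cos (2 * (\<xi> \<bullet> h))) / norm h powr (real CARD('n) + 2 * s) * K (h /\<^sub>R norm h)) \<le> F h"
  shows "ennreal (m * \<rho> powr (2 - 2 * s) * \<eta> * norm \<xi> powr (2 * s)) \<le> (\<integral>\<^sup>+h. F h \<partial>lebesgue)"
proof -
  have Ssub: "S \<subseteq> sphere 0 1" using sm unfolding sphere_measurable_def by blast
  define a where "a = norm \<xi>"
  have apos: "a > 0" using nz a_def by simp
  define p where "p = real CARD('n) + 2 * s"
  have p: "p \<ge> 0" using s p_def by simp
  define B where "B = (a / \<rho>) powr p * \<eta>"
  have B: "B \<ge> 0" using eta B_def by simp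
  let ?C = "sphere_cone S"
  have "(\<integral>\<^sup>+h. ennreal (B * ((\<xi> \<bullet> h)^2 * indicator ?C ((a / \<rho>) *\<^sub>R h))) \<partial>lebesgue) \<le> (\<integral>\<^sup>+h. F h \<partial>lebesgue)"
  proof (rule nn_integral_mono)
    fix h
    show "ennreal (B * ((\<xi> \<bullet> h)^2 * indicator ?C ((a / \<rho>) *\<^sub>R h))) \<le> F h"
    proof (cases "(a / \<rho>) *\<^sub>R h \<in> ?C")
      case True
      note P = pointwise[OF Ssub Kpos eta rho nz p True[unfolded a_def]]
      have "ennreal (B * ((\<xi> \<bullet> h)^2 * indicator ?C ((a / \<rho>) *\<^sub>R h))) = ennreal ((a / \<rho>) powr p * \<eta> * (\<xi> \<bullet> h)^2)"
        using True B_def by (simp add: mult_ac)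
      also have "\<dots> \<le> ennreal ((1 - cos (2 * (\<xi> \<bullet> h))) / norm h powr p * K (h /\<^sub>R norm h))"
        using P unfolding a_def by (intro ennreal_leI) blast
      also have "\<dots> \<le> F h" using F P unfolding p_def by blast
      finally show ?thesis .
    next
      case False then show ?thesis by simp
    qed
  qed
  moreover have "(\<integral>\<^sup>+h. ennreal (B * ((\<xi> \<bullet> h)^2 * indicator ?C ((a / \<rho>) *\<^sub>R h))) \<partial>lebesgue)
      = ennreal B * (\<integral>\<^sup>+h. ennreal ((\<xi> \<bullet> h)^2 * indicator ?C ((a / \<rho>) *\<^sub>R h)) \<partial>lebesgue)"
  proof -
    have "(\<lambda>h. ennreal (B * ((\<xi> \<bullet> h)^2 * indicator ?C ((a / \<rho>) *\<^sub>R h))))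
        = (\<lambda>h. ennreal B * ennreal ((\<xi> \<bullet> h)^2 * indicator ?C ((a / \<rho>) *\<^sub>R h)))"
      by (intro ext) (rule ennreal_mult'[OF B])
    then show ?thesis using nn_integral_cmult[OF phi_meas[OF sm]] by simp
  qed
  moreover have "(\<integral>\<^sup>+h. ennreal ((\<xi> \<bullet> h)^2 * indicator ?C ((a / \<rho>) *\<^sub>R h)) \<partial>lebesgue)
      = ennreal ((\<rho> / a)^(CARD('n)+2) * Qf ?C \<xi>)"
    unfolding a_def by (rule core_int[OF sm rho(1) nz])
  moreover have "ennreal ((\<rho> / a)^(CARD('n)+2) * (m * a^2)) \<le> ennreal ((\<rho> / a)^(CARD('n)+2) * Qf ?C \<xi>)"
    using m rho apos unfolding a_def by (intro ennreal_leI mult_left_mono) auto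
  ultimately have "ennreal B * ennreal ((\<rho> / a)^(CARD('n)+2) * (m * a^2)) \<le> (\<integral>\<^sup>+h. F h \<partial>lebesgue)"
    by (metis (no_types, lifting) dual_order.trans mult_left_mono zero_le)
  moreover have "ennreal B * ennreal ((\<rho> / a)^(CARD('n)+2) * (m * a^2)) = ennreal (m * \<rho> powr (2 - 2 * s) * \<eta> * a powr (2 * s))"
  proof -
    have "ennreal B * ennreal ((\<rho> / a)^(CARD('n)+2) * (m * a^2)) = ennreal (B * ((\<rho> / a)^(CARD('n)+2) * (m * a^2)))"
      by (rule ennreal_mult'[OF B, symmetric])
    also have "B * ((\<rho> / a)^(CARD('n)+2) * (m * a^2)) = m * \<rho> powr (2 - 2 * s) * \<eta> * a powr (2 * s)"
      unfolding B_def p_def by (rule powr_arith[OF apos rho(1)])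
    finally show ?thesis .
  qed
  ultimately show ?thesis unfolding a_def by simp
qed

lemma count_lb:
  fixes g :: "'a::zero \<Rightarrow> ennreal"
  assumes "0 \<in> L" shows "g 0 \<le> (\<integral>\<^sup>+m. g m \<partial>count_space L)"
proof -
  have "(\<integral>\<^sup>+m. g m * indicator {0} m \<partial>count_space L) = g 0 * emeasure (count_space L) {0}"
    by (rule nn_integral_indicator_singleton) (simp add: assms)
  also have "emeasure (count_space L) {0} = 1" using assms by (simp add: emeasure_count_space_finite)
  finally have "g 0 = (\<integral>\<^sup>+m. g m * indicator {0} m \<partial>count_space L)" by simp
  also have "\<dots> \<le> (\<integral>\<^sup>+m. g m \<partial>count_space L)"
    by (intro nn_integral_mono) (auto simp: indicator_def)
  finally show ?thesis .
qed

lemma lattice_norm_ge1: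
  fixes k :: "real^'n"
  assumes "k \<in> int_lattice" "k \<noteq> 0" shows "norm k \<ge> 1"
proof -
  obtain i where i: "k$i \<noteq> 0" using assms(2) by (metis vec_eq_iff zero_index)
  have "k$i \<in> \<int>" using assms(1) unfolding int_lattice_def by blast
  then have "\<bar>k$i\<bar> \<ge> 1" using i by (rule Ints_nonzero_abs_ge1)
  then show ?thesis using component_le_norm_cart[of k i] by linarith
qed

lemma INF_le_K:
  fixes K :: "real^'n \<Rightarrow> real"
  assumes "S \<subseteq> sphere 0 1" "\<forall>x\<in>sphere 0 1. 0 \<le> K x \<and> K x \<le> 1"
  shows "\<forall>x\<in>S. (INF x\<in>S. K x) \<le> K x"
proof
  fix x assume "x \<in> S"
  have "bdd_below (K ` S)" using assms by (intro bdd_belowI[where m=0]) auto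
  then show "(INF x\<in>S. K x) \<le> K x" using \<open>x \<in> S\<close> by (rule cINF_lower)
qed

theorem lemma2p2:
  fixes s :: real and \<Sigma> :: "(real ^ 'n) set"
  assumes s: "0 < s" "s < 1"
    and \<Sigma>: "sphere_measurable \<Sigma>" "surface_measure \<Sigma> > 0"
  shows
    "(\<forall>rbar > 0. \<exists>c > 0. \<forall>K :: real ^ 'n \<Rightarrow> real.
        (\<lambda>h. K (h /\<^sub>R norm h)) \<in> borel_measurable lebesgue \<longrightarrow>
        (\<forall>x \<in> sphere 0 1. 0 \<le> K x \<and> K x \<le> 1) \<longrightarrow>
        (INF x\<in>\<Sigma>. K x) > 0 \<longrightarrow>
        (\<forall>R R' (\<xi> :: real ^ 'n). 0 < R \<longrightarrow> 0 < R' \<longrightarrow> R * R' \<ge> rbar \<longrightarrow>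
            \<xi> \<notin> ball 0 R' \<longrightarrow>
            (\<integral>\<^sup>+ h \<in> ball 0 R. ennreal ((1 - cos (2 * (\<xi> \<bullet> h))) / norm h powr (real CARD('n) + 2 * s)
                 * K (h /\<^sub>R norm h)) \<partial>lebesgue)
            \<ge> ennreal (c * (INF x\<in>\<Sigma>. K x) * norm \<xi> powr (2 * s))))
   \<and> (\<exists>c > 0. \<forall>K :: real ^ 'n \<Rightarrow> real.
        (\<lambda>h. K (h /\<^sub>R norm h)) \<in> borel_measurable lebesgue \<longrightarrow>
        (\<forall>x \<in> sphere 0 1. 0 \<le> K x \<and> K x \<le> 1) \<longrightarrow>
        (INF x\<in>\<Sigma>. K x) > 0 \<longrightarrow>
        (\<forall>\<xi> :: real ^ 'n.
            (\<integral>\<^sup>+ h. ennreal ((1 - cos (2 * (\<xi> \<bullet> h))) / norm h powr (real CARD('n) + 2 * s)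
                 * K (h /\<^sub>R norm h)) \<partial>lebesgue)
            \<ge> ennreal (c * (INF x\<in>\<Sigma>. K x) * norm \<xi> powr (2 * s))))
   \<and> (\<exists>c > 0. \<forall>K :: real ^ 'n \<Rightarrow> real.
        (\<lambda>h. K (h /\<^sub>R norm h)) \<in> borel_measurable lebesgue \<longrightarrow>
        (\<forall>x \<in> sphere 0 1. 0 \<le> K x \<and> K x \<le> 1) \<longrightarrow>
        (INF x\<in>\<Sigma>. K x) > 0 \<longrightarrow>
        (\<forall>k \<in> int_lattice.
            (\<integral>\<^sup>+ h \<in> unit_cube. ennreal (1 - cos (2 * pi * (k \<bullet> h))) *
               (\<integral>\<^sup>+ m. ennreal (K ((h + m) /\<^sub>R norm (h + m)) / norm (h + m) powr (real CARD('n) + 2 * s))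
                  \<partial>count_space int_lattice) \<partial>lebesgue)
            \<ge> ennreal (c * (INF x\<in>\<Sigma>. K x) * norm k powr (2 * s))))"
proof -
  have Ssub: "\<Sigma> \<subseteq> sphere 0 1" using \<Sigma>(1) unfolding sphere_measurable_def by blast
  obtain m where m: "m > 0" "\<forall>\<xi>. m * norm \<xi> ^ 2 \<le> Qf (sphere_cone \<Sigma>) \<xi>"
    using Q_min[OF \<Sigma>] by blast
  have P1: "\<forall>rbar > 0. \<exists>c > 0. \<forall>K :: real ^ 'n \<Rightarrow> real.
        (\<lambda>h. K (h /\<^sub>R norm h)) \<in> borel_measurable lebesgue \<longrightarrow>
        (\<forall>x \<in> sphere 0 1. 0 \<le> K x \<and> K x \<le> 1) \<longrightarrow>
        (INF x\<in>\<Sigma>. K x) > 0 \<longrightarrow>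
        (\<forall>R R' (\<xi> :: real ^ 'n). 0 < R \<longrightarrow> 0 < R' \<longrightarrow> R * R' \<ge> rbar \<longrightarrow>
            \<xi> \<notin> ball 0 R' \<longrightarrow>
            (\<integral>\<^sup>+ h \<in> ball 0 R. ennreal ((1 - cos (2 * (\<xi> \<bullet> h))) / norm h powr (real CARD('n) + 2 * s)
                 * K (h /\<^sub>R norm h)) \<partial>lebesgue)
            \<ge> ennreal (c * (INF x\<in>\<Sigma>. K x) * norm \<xi> powr (2 * s)))"
  proof (intro allI impI)
    fix rbar :: real assume rb: "rbar > 0"
    define \<rho> where "\<rho> = min (1/2) (rbar/2)"
    have rho: "0 < \<rho>" "\<rho> \<le> 1/2" "\<rho> < rbar" using rb unfolding \<rho>_def by auto
    show "\<exists>c > 0. \<forall>K :: real ^ 'n \<Rightarrow> real.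
        (\<lambda>h. K (h /\<^sub>R norm h)) \<in> borel_measurable lebesgue \<longrightarrow>
        (\<forall>x \<in> sphere 0 1. 0 \<le> K x \<and> K x \<le> 1) \<longrightarrow>
        (INF x\<in>\<Sigma>. K x) > 0 \<longrightarrow>
        (\<forall>R R' (\<xi> :: real ^ 'n). 0 < R \<longrightarrow> 0 < R' \<longrightarrow> R * R' \<ge> rbar \<longrightarrow>
            \<xi> \<notin> ball 0 R' \<longrightarrow>
            (\<integral>\<^sup>+ h \<in> ball 0 R. ennreal ((1 - cos (2 * (\<xi> \<bullet> h))) / norm h powr (real CARD('n) + 2 * s)
                 * K (h /\<^sub>R norm h)) \<partial>lebesgue)
            \<ge> ennreal (c * (INF x\<in>\<Sigma>. K x) * norm \<xi> powr (2 * s)))"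
    proof (rule exI[where x="m * \<rho> powr (2 - 2 * s)"], intro conjI allI impI)
      show "m * \<rho> powr (2 - 2 * s) > 0" using m rho by simp
      fix K :: "real^'n \<Rightarrow> real" and R R' :: real and \<xi> :: "real^'n"
      assume Kb: "\<forall>x \<in> sphere 0 1. 0 \<le> K x \<and> K x \<le> 1" and Kinf: "(INF x\<in>\<Sigma>. K x) > 0"
        and R: "0 < R" and R': "0 < R'" and RR: "R * R' \<ge> rbar" and xi: "\<xi> \<notin> ball 0 R'"
      have Kin: "\<forall>x\<in>\<Sigma>. (INF x\<in>\<Sigma>. K x) \<le> K x" by (rule INF_le_K[OF Ssub Kb])
      have nxi: "norm \<xi> \<ge> R'" using xi by (simp add: dist_norm)
      have nz: "\<xi> \<noteq> 0" using nxi R' by auto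
      have "ennreal (m * \<rho> powr (2 - 2 * s) * (INF x\<in>\<Sigma>. K x) * norm \<xi> powr (2 * s)) \<le>
         (\<integral>\<^sup>+h. ennreal ((1 - cos (2 * (\<xi> \<bullet> h))) / norm h powr (real CARD('n) + 2 * s)
                 * K (h /\<^sub>R norm h)) * indicator (ball 0 R) h \<partial>lebesgue)"
      proof (rule main_lb[OF \<Sigma>(1) m(2) m(1) Kin _ rho(1) rho(2) nz s(1)])
        show "0 \<le> (INF x\<in>\<Sigma>. K x)" using Kinf by simp
        fix h :: "real^'n" assume "h \<noteq> 0" "norm h \<le> \<rho> / norm \<xi>"
        have "R * R' \<le> R * norm \<xi>" using nxi R by (intro mult_left_mono) auto
        then have "\<rho> < R * norm \<xi>" using rho RR by linarith
        then have "\<rho> / norm \<xi> < R" using nz by (simp add: divide_less_eq mult.commute)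
        then have "h \<in> ball 0 R" using \<open>norm h \<le> \<rho> / norm \<xi>\<close> by (simp add: dist_norm)
        then show "ennreal ((1 - cos (2 * (\<xi> \<bullet> h))) / norm h powr (real CARD('n) + 2 * s) * K (h /\<^sub>R norm h))
          \<le> ennreal ((1 - cos (2 * (\<xi> \<bullet> h))) / norm h powr (real CARD('n) + 2 * s) * K (h /\<^sub>R norm h)) * indicator (ball 0 R) h"
          by simp
      qed
      then show "ennreal ((m * \<rho> powr (2 - 2 * s)) * (INF x\<in>\<Sigma>. K x) * norm \<xi> powr (2 * s)) \<le>
         (\<integral>\<^sup>+ h \<in> ball 0 R. ennreal ((1 - cos (2 * (\<xi> \<bullet> h))) / norm h powr (real CARD('n) + 2 * s)
                 * K (h /\<^sub>R norm h)) \<partial>lebesgue)" by simp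
    qed
  qed
  have P2: "\<exists>c > 0. \<forall>K :: real ^ 'n \<Rightarrow> real.
        (\<lambda>h. K (h /\<^sub>R norm h)) \<in> borel_measurable lebesgue \<longrightarrow>
        (\<forall>x \<in> sphere 0 1. 0 \<le> K x \<and> K x \<le> 1) \<longrightarrow>
        (INF x\<in>\<Sigma>. K x) > 0 \<longrightarrow>
        (\<forall>\<xi> :: real ^ 'n.
            (\<integral>\<^sup>+ h. ennreal ((1 - cos (2 * (\<xi> \<bullet> h))) / norm h powr (real CARD('n) + 2 * s)
                 * K (h /\<^sub>R norm h)) \<partial>lebesgue)
            \<ge> ennreal (c * (INF x\<in>\<Sigma>. K x) * norm \<xi> powr (2 * s)))"
  proof (rule exI[where x="m * (1/2) powr (2 - 2 * s)"], intro conjI allI impI)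
    show "m * (1/2) powr (2 - 2 * s) > 0" using m by simp
    fix K :: "real^'n \<Rightarrow> real" and \<xi> :: "real^'n"
    assume Kb: "\<forall>x \<in> sphere 0 1. 0 \<le> K x \<and> K x \<le> 1" and Kinf: "(INF x\<in>\<Sigma>. K x) > 0"
    have Kin: "\<forall>x\<in>\<Sigma>. (INF x\<in>\<Sigma>. K x) \<le> K x" by (rule INF_le_K[OF Ssub Kb])
    show "ennreal ((m * (1/2) powr (2 - 2 * s)) * (INF x\<in>\<Sigma>. K x) * norm \<xi> powr (2 * s)) \<le>
         (\<integral>\<^sup>+ h. ennreal ((1 - cos (2 * (\<xi> \<bullet> h))) / norm h powr (real CARD('n) + 2 * s)
                 * K (h /\<^sub>R norm h)) \<partial>lebesgue)"
    proof (cases "\<xi> = 0")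
      case True then show ?thesis by simp
    next
      case False
      show ?thesis
      proof (rule main_lb[OF \<Sigma>(1) m(2) m(1) Kin _ _ _ False s(1)])
        show "0 \<le> (INF x\<in>\<Sigma>. K x)" using Kinf by simp
      qed auto
    qed
  qed
  have P3: "\<exists>c > 0. \<forall>K :: real ^ 'n \<Rightarrow> real.
        (\<lambda>h. K (h /\<^sub>R norm h)) \<in> borel_measurable lebesgue \<longrightarrow>
        (\<forall>x \<in> sphere 0 1. 0 \<le> K x \<and> K x \<le> 1) \<longrightarrow>
        (INF x\<in>\<Sigma>. K x) > 0 \<longrightarrow>
        (\<forall>k \<in> int_lattice.
            (\<integral>\<^sup>+ h \<in> unit_cube. ennreal (1 - cos (2 * pi * (k \<bullet> h))) *
               (\<integral>\<^sup>+ m. ennreal (K ((h + m) /\<^sub>R norm (h + m)) / norm (h + m) powr (real CARD('n) + 2 * s))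
                  \<partial>count_space int_lattice) \<partial>lebesgue)
            \<ge> ennreal (c * (INF x\<in>\<Sigma>. K x) * norm k powr (2 * s)))"
  proof (rule exI[where x="m * (1/2) powr (2 - 2 * s) * pi powr (2 * s)"], intro conjI allI impI ballI)
    show "m * (1/2) powr (2 - 2 * s) * pi powr (2 * s) > 0" using m by simp
    fix K :: "real^'n \<Rightarrow> real" and k :: "real^'n"
    assume Kb: "\<forall>x \<in> sphere 0 1. 0 \<le> K x \<and> K x \<le> 1" and Kinf: "(INF x\<in>\<Sigma>. K x) > 0"
      and kL: "k \<in> int_lattice"
    have Kin: "\<forall>x\<in>\<Sigma>. (INF x\<in>\<Sigma>. K x) \<le> K x" by (rule INF_le_K[OF Ssub Kb])
    show "ennreal ((m * (1/2) powr (2 - 2 * s) * pi powr (2 * s)) * (INF x\<in>\<Sigma>. K x) * norm k powr (2 * s)) \<le>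
         (\<integral>\<^sup>+ h \<in> unit_cube. ennreal (1 - cos (2 * pi * (k \<bullet> h))) *
               (\<integral>\<^sup>+ m. ennreal (K ((h + m) /\<^sub>R norm (h + m)) / norm (h + m) powr (real CARD('n) + 2 * s))
                  \<partial>count_space int_lattice) \<partial>lebesgue)"
    proof (cases "k = 0")
      case True then show ?thesis by simp
    next
      case False
      have nk: "norm k \<ge> 1" by (rule lattice_norm_ge1[OF kL False])
      define \<xi> where "\<xi> = pi *\<^sub>R k"
      have nxi: "norm \<xi> = pi * norm k" unfolding \<xi>_def by simp
      have nz: "\<xi> \<noteq> 0" unfolding \<xi>_def using False by simp
      have zL: "(0::real^'n) \<in> int_lattice" unfolding int_lattice_def by simp
      have eqc: "m * (1/2) powr (2 - 2 * s) * (INF x\<in>\<Sigma>. K x) * norm \<xi> powr (2 * s)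
          = (m * (1/2) powr (2 - 2 * s) * pi powr (2 * s)) * (INF x\<in>\<Sigma>. K x) * norm k powr (2 * s)"
        unfolding nxi by (simp add: powr_mult mult_ac)
      have "ennreal (m * (1/2) powr (2 - 2 * s) * (INF x\<in>\<Sigma>. K x) * norm \<xi> powr (2 * s)) \<le>
         (\<integral>\<^sup>+ h. ennreal (1 - cos (2 * pi * (k \<bullet> h))) *
               (\<integral>\<^sup>+ m. ennreal (K ((h + m) /\<^sub>R norm (h + m)) / norm (h + m) powr (real CARD('n) + 2 * s))
                  \<partial>count_space int_lattice) * indicator unit_cube h \<partial>lebesgue)"
      proof (rule main_lb[OF \<Sigma>(1) m(2) m(1) Kin _ _ _ nz s(1)])
        show "0 \<le> (INF x\<in>\<Sigma>. K x)" using Kinf by simp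
        show "(0::real) < 1/2" "(1/2::real) \<le> 1/2" by auto
        fix h :: "real^'n" assume hnz: "h \<noteq> 0" and hn: "norm h \<le> (1/2) / norm \<xi>"
        have "pi * norm k \<ge> 1 * 1" using nk pi_gt3 by (intro mult_mono) auto
        then have nx1: "norm \<xi> \<ge> 1" using nxi by simp
        have "(1/2) / norm \<xi> \<le> (1/2) / 1" using nx1 by (intro divide_left_mono) auto
        then have "(1/2) / norm \<xi> \<le> 1/2" by simp
        then have hn2: "norm h \<le> 1/2" using hn by linarith
        have cube: "h \<in> unit_cube" unfolding unit_cube_def
        proof (intro CollectI allI)
          fix i have "\<bar>h$i\<bar> \<le> 1/2" using component_le_norm_cart[of h i] hn2 by linarith
          then show "- (1/2) \<le> h $ i \<and> h $ i \<le> 1/2" by linarith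
        qed
        have hs: "h /\<^sub>R norm h \<in> sphere 0 1" using hnz by (simp add: norm_divide)
        have cosnn: "0 \<le> 1 - cos (2 * pi * (k \<bullet> h))" by simp
        have xh: "2 * (\<xi> \<bullet> h) = 2 * pi * (k \<bullet> h)" unfolding \<xi>_def by simp
        have "ennreal ((1 - cos (2 * (\<xi> \<bullet> h))) / norm h powr (real CARD('n) + 2 * s) * K (h /\<^sub>R norm h))
            = ennreal (1 - cos (2 * pi * (k \<bullet> h))) * ennreal (K (h /\<^sub>R norm h) / norm h powr (real CARD('n) + 2 * s))"
          unfolding xh by (subst ennreal_mult'[OF cosnn, symmetric]) (simp add: mult_ac)
        also have "\<dots> \<le> ennreal (1 - cos (2 * pi * (k \<bullet> h))) *
               (\<integral>\<^sup>+ m. ennreal (K ((h + m) /\<^sub>R norm (h + m)) / norm (h + m) powr (real CARD('n) + 2 * s))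
                  \<partial>count_space int_lattice)"
          using count_lb[OF zL, of "\<lambda>m. ennreal (K ((h + m) /\<^sub>R norm (h + m)) / norm (h + m) powr (real CARD('n) + 2 * s))"]
          by (intro mult_left_mono) auto
        also have "\<dots> = ennreal (1 - cos (2 * pi * (k \<bullet> h))) *
               (\<integral>\<^sup>+ m. ennreal (K ((h + m) /\<^sub>R norm (h + m)) / norm (h + m) powr (real CARD('n) + 2 * s))
                  \<partial>count_space int_lattice) * indicator unit_cube h"
          using cube by simp
        finally show "ennreal ((1 - cos (2 * (\<xi> \<bullet> h))) / norm h powr (real CARD('n) + 2 * s) * K (h /\<^sub>R norm h))
            \<le> ennreal (1 - cos (2 * pi * (k \<bullet> h))) *
               (\<integral>\<^sup>+ m. ennreal (K ((h + m) /\<^sub>R norm (h + m)) / norm (h + m) powr (real CARD('n) + 2 * s))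
                  \<partial>count_space int_lattice) * indicator unit_cube h" .
      qed
      then show ?thesis unfolding eqc by simp
    qed
  qed
  show ?thesis using P1 P2 P3 by blast
qed

end
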